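(* Let $G$ and $H$ be two connected nontrivial graphs. If $S$ is a cycle hull set of $G\Box H$, then $\pi_G(S)$ and $\pi_H(S)$ are cycle hull sets of $G$ and $H$ respectively.
   Context: All graphs are finite, simple and undirected. For a graph $G$ and $S\subseteq V(G)$, the cycle interval $\langle S\rangle$ consists of the vertices of $S$ together with every vertex $w\in V(G)\setminus S$ such that $G[S\cup\{w\}]$ contains a cycle through $w$; $S$ is cycle convex if $\langle S\rangle=S$; the cycle convex hull $\langle S\rangle_C$ is the smallest cycle convex set containing $S$; $S$ is a cycle hull set if $\langle S\rangle_C=V(G)$. The Cartesian product $G\Box H$ has vertex set $V(G)\times V(H)$, with $(g_1,h_1)\sim(g_2,h_2)$ iff ($g_1\sim g_2$ and $h_1=h_2$) or ($g_1=g_2$ and $h_1\sim h_2$). For $S\subseteq V(G)\times V(H)$, $\pi_G(S)=\{g:(g,h)\in S\text{ for some }h\}$ and $\pi_H(S)=\{h:(g,h)\in S\text{ for some }g\}$. A graph is nontrivial if it has at least two vertices. *)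

theory Defs
  imports Main
begin

definition graph :: "'a set \<Rightarrow> ('a \<Rightarrow> 'a \<Rightarrow> bool) \<Rightarrow> bool" where
  "graph V E \<longleftrightarrow> finite V \<and> (\<forall>x y. E x y \<longrightarrow> x \<in> V \<and> y \<in> V)
     \<and> (\<forall>x y. E x y \<longrightarrow> E y x) \<and> (\<forall>x. \<not> E x x)"

fun walk :: "('a \<Rightarrow> 'a \<Rightarrow> bool) \<Rightarrow> 'a list \<Rightarrow> bool" where
  "walk E [] = True"
| "walk E [x] = True"
| "walk E (x # y # xs) = (E x y \<and> walk E (y # xs))"

definition connected :: "'a set \<Rightarrow> ('a \<Rightarrow> 'a \<Rightarrow> bool) \<Rightarrow> bool" where
  "connected V E \<longleftrightarrow> (\<forall>x\<in>V. \<forall>y\<in>V. \<exists>p. p \<noteq> [] \<and> hd p = x \<and> last p = y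
      \<and> set p \<subseteq> V \<and> walk E p)"

definition is_cycle :: "('a \<Rightarrow> 'a \<Rightarrow> bool) \<Rightarrow> 'a list \<Rightarrow> bool" where
  "is_cycle E c \<longleftrightarrow> length c \<ge> 3 \<and> distinct c \<and> walk E c \<and> E (last c) (hd c)"

definition cycle_through :: "('a \<Rightarrow> 'a \<Rightarrow> bool) \<Rightarrow> 'a set \<Rightarrow> 'a \<Rightarrow> bool" where
  "cycle_through E T w \<longleftrightarrow> (\<exists>c. is_cycle E c \<and> set c \<subseteq> T \<and> w \<in> set c)"

definition cycle_interval :: "'a set \<Rightarrow> ('a \<Rightarrow> 'a \<Rightarrow> bool) \<Rightarrow> 'a set \<Rightarrow> 'a set" where
  "cycle_interval V E S = S \<union> {w \<in> V - S. cycle_through E (S \<union> {w}) w}"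

definition cycle_convex :: "'a set \<Rightarrow> ('a \<Rightarrow> 'a \<Rightarrow> bool) \<Rightarrow> 'a set \<Rightarrow> bool" where
  "cycle_convex V E S \<longleftrightarrow> cycle_interval V E S = S"

definition cycle_hull :: "'a set \<Rightarrow> ('a \<Rightarrow> 'a \<Rightarrow> bool) \<Rightarrow> 'a set \<Rightarrow> 'a set" where
  "cycle_hull V E S = \<Inter> {T. S \<subseteq> T \<and> T \<subseteq> V \<and> cycle_convex V E T}"

definition cycle_hull_set :: "'a set \<Rightarrow> ('a \<Rightarrow> 'a \<Rightarrow> bool) \<Rightarrow> 'a set \<Rightarrow> bool" where
  "cycle_hull_set V E S \<longleftrightarrow> S \<subseteq> V \<and> cycle_hull V E S = V"

definition cart_adj :: "('a \<Rightarrow> 'a \<Rightarrow> bool) \<Rightarrow> ('b \<Rightarrow> 'b \<Rightarrow> bool)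
    \<Rightarrow> 'a \<times> 'b \<Rightarrow> 'a \<times> 'b \<Rightarrow> bool" where
  "cart_adj E F = (\<lambda>(g1, h1) (g2, h2). (E g1 g2 \<and> h1 = h2) \<or> (g1 = g2 \<and> F h1 h2))"

end

theory Submission
  imports Defs
begin

lemma walk_Cons2: "walk E (x # q) = (q = [] \<or> (E x (hd q) \<and> walk E q))"
  by (cases q) auto

lemma walk_append: "walk E (xs @ ys) = (walk E xs \<and> walk E ys \<and> (xs \<noteq> [] \<and> ys \<noteq> [] \<longrightarrow> E (last xs) (hd ys)))"
  by (induction xs) (auto simp: walk_Cons2)

lemma rotate_cycle:
  assumes "is_cycle E c" "w \<in> set c"
  shows "\<exists>p. is_cycle E (w # p) \<and> set (w # p) = set c"
proof -
  obtain xs ys where c: "c = xs @ w # ys" using assms(2) by (meson split_list)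
  have w: "walk E (w # ys)" "walk E xs" "xs \<noteq> [] \<longrightarrow> E (last xs) w"
    using assms(1) c unfolding is_cycle_def by (auto simp: walk_append)
  have cl: "E (last c) (hd c)" using assms(1) unfolding is_cycle_def by auto
  have "is_cycle E ((w # ys) @ xs)"
  proof -
    have "walk E ((w # ys) @ xs)"
      using w cl c by (subst walk_append) (cases xs; auto)
    moreover have "E (last ((w # ys) @ xs)) w"
      using w cl c by (cases xs) auto
    ultimately show ?thesis using assms(1) c unfolding is_cycle_def by auto
  qed
  then show ?thesis using c by (intro exI[of _ "ys @ xs"]) auto
qed

lemma cycle_head:
  assumes "is_cycle E (w # p)"
  shows "length p \<ge> 2 \<and> distinct (w # p) \<and> E w (hd p) \<and> walk E p \<and> E (last p) w"
  using assms unfolding is_cycle_def by (cases p) auto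

lemma walk_proj_fst: "walk (cart_adj EG EH) p \<Longrightarrow> walk (\<lambda>x y. x = y \<or> EG x y) (map fst p)"
  by (induction p rule: induct_list012) (auto simp: cart_adj_def split: prod.splits)

lemma walk_proj_snd: "walk (cart_adj EG EH) p \<Longrightarrow> walk (\<lambda>x y. x = y \<or> EH x y) (map snd p)"
  by (induction p rule: induct_list012) (auto simp: cart_adj_def split: prod.splits)

lemma dedup:
  "walk (\<lambda>x y. x = y \<or> E x y) q \<Longrightarrow> q \<noteq> [] \<Longrightarrow>
   \<exists>q'. distinct q' \<and> walk E q' \<and> q' \<noteq> [] \<and> hd q' = hd q \<and> last q' = last q \<and> set q' \<subseteq> set q"
proof (induction q rule: induct_list012)
  case 1
  then show ?case by simp
next
  case (2 x)
  then show ?case by (intro exI[of _ "[x]"]) auto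
next
  case (3 x y xs)
  then obtain q0 where q0: "distinct q0" "walk E q0" "q0 \<noteq> []" "hd q0 = y"
    "last q0 = last (y # xs)" "set q0 \<subseteq> set (y # xs)" by auto
  show ?case
  proof (cases "x \<in> set q0")
    case True
    then obtain u v where uv: "q0 = u @ x # v" by (meson split_list)
    have "walk E (x # v)" using q0(2) uv by (simp add: walk_append)
    then show ?thesis using q0 uv by (intro exI[of _ "x # v"]) auto
  next
    case False
    then have "x \<noteq> y" using q0 by (cases q0) auto
    then have "E x y" using 3 by auto
    then show ?thesis using q0 False by (intro exI[of _ "x # q0"]) (auto simp: walk_Cons2)
  qed
qed

lemma hd_last_distinct: "distinct p \<Longrightarrow> length p \<ge> 2 \<Longrightarrow> hd p \<noteq> last p"
  by (cases p) auto

lemma convex_prod_fst: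
  assumes "T \<subseteq> VG" "cycle_convex VG EG T"
  shows "cycle_convex (VG \<times> VH) (cart_adj EG EH) (T \<times> VH)"
proof -
  have "{w \<in> VG \<times> VH - T \<times> VH. cycle_through (cart_adj EG EH) (T \<times> VH \<union> {w}) w} = {}"
  proof (rule ccontr)
    assume "\<not> ?thesis"
    then obtain g h where gh: "(g, h) \<in> VG \<times> VH - T \<times> VH"
      "cycle_through (cart_adj EG EH) (T \<times> VH \<union> {(g,h)}) (g,h)" by auto
    then obtain c where c: "is_cycle (cart_adj EG EH) c" "set c \<subseteq> T \<times> VH \<union> {(g,h)}" "(g,h) \<in> set c"
      unfolding cycle_through_def by auto
    then obtain p where p: "is_cycle (cart_adj EG EH) ((g,h) # p)" "set ((g,h) # p) = set c"
      using rotate_cycle[OF c(1) c(3)] by blast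
    note ph = cycle_head[OF p(1)]
    have gT: "g \<notin> T" using gh by auto
    have sp: "set p \<subseteq> T \<times> VH" using ph p(2) c(2) by auto
    have pne: "p \<noteq> []" using ph by auto
    obtain g1 h1 where 1: "hd p = (g1, h1)" by fastforce
    obtain g2 h2 where 2: "last p = (g2, h2)" by fastforce
    have "(g1, h1) \<in> T \<times> VH" by (metis 1 hd_in_set pne sp subsetD)
    then have e1: "EG g g1" "h1 = h" using ph 1 gT by (auto simp: cart_adj_def)
    have "(g2, h2) \<in> T \<times> VH" by (metis 2 last_in_set pne sp subsetD)
    then have e2: "EG g2 g" "h2 = h" using ph 2 gT by (auto simp: cart_adj_def)
    have "hd p \<noteq> last p" using ph hd_last_distinct by auto
    then have g12: "g1 \<noteq> g2" using 1 2 e1 e2 by auto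
    have "walk (\<lambda>x y. x = y \<or> EG x y) (map fst p)" using ph walk_proj_fst by blast
    then obtain q where q: "distinct q" "walk EG q" "q \<noteq> []" "hd q = g1" "last q = g2"
      "set q \<subseteq> fst ` set p"
      using dedup[of EG "map fst p"] pne 1 2 by (auto simp: hd_map last_map)
    have sq: "set q \<subseteq> T" using q(6) sp by force
    have "length q \<ge> 2" using q(3,4,5) g12 by (cases q; cases "tl q") auto
    then have "is_cycle EG (g # q)" using q e1 e2 gT sq
      unfolding is_cycle_def by (auto simp: walk_Cons2)
    then have "cycle_through EG (T \<union> {g}) g" unfolding cycle_through_def using sq by force
    then have "g \<in> cycle_interval VG EG T" using gh gT unfolding cycle_interval_def by auto
    then show False using assms(2) gT unfolding cycle_convex_def by auto
  qed
  then show ?thesis unfolding cycle_convex_def cycle_interval_def by auto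
qed

lemma convex_prod_snd:
  assumes "T \<subseteq> VH" "cycle_convex VH EH T"
  shows "cycle_convex (VG \<times> VH) (cart_adj EG EH) (VG \<times> T)"
proof -
  have "{w \<in> VG \<times> VH - VG \<times> T. cycle_through (cart_adj EG EH) (VG \<times> T \<union> {w}) w} = {}"
  proof (rule ccontr)
    assume "\<not> ?thesis"
    then obtain g h where gh: "(g, h) \<in> VG \<times> VH - VG \<times> T"
      "cycle_through (cart_adj EG EH) (VG \<times> T \<union> {(g,h)}) (g,h)" by auto
    then obtain c where c: "is_cycle (cart_adj EG EH) c" "set c \<subseteq> VG \<times> T \<union> {(g,h)}" "(g,h) \<in> set c"
      unfolding cycle_through_def by auto
    then obtain p where p: "is_cycle (cart_adj EG EH) ((g,h) # p)" "set ((g,h) # p) = set c"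
      using rotate_cycle[OF c(1) c(3)] by blast
    note ph = cycle_head[OF p(1)]
    have gT: "h \<notin> T" using gh by auto
    have sp: "set p \<subseteq> VG \<times> T" using ph p(2) c(2) by auto
    have pne: "p \<noteq> []" using ph by auto
    obtain g1 h1 where 1: "hd p = (g1, h1)" by fastforce
    obtain g2 h2 where 2: "last p = (g2, h2)" by fastforce
    have "(g1, h1) \<in> VG \<times> T" by (metis 1 hd_in_set pne sp subsetD)
    then have e1: "EH h h1" "g1 = g" using ph 1 gT by (auto simp: cart_adj_def)
    have "(g2, h2) \<in> VG \<times> T" by (metis 2 last_in_set pne sp subsetD)
    then have e2: "EH h2 h" "g2 = g" using ph 2 gT by (auto simp: cart_adj_def)
    have "hd p \<noteq> last p" using ph hd_last_distinct by auto
    then have g12: "h1 \<noteq> h2" using 1 2 e1 e2 by auto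
    have "walk (\<lambda>x y. x = y \<or> EH x y) (map snd p)" using ph walk_proj_snd by blast
    then obtain q where q: "distinct q" "walk EH q" "q \<noteq> []" "hd q = h1" "last q = h2"
      "set q \<subseteq> snd ` set p"
      using dedup[of EH "map snd p"] pne 1 2 by (auto simp: hd_map last_map)
    have sq: "set q \<subseteq> T" using q(6) sp by force
    have "length q \<ge> 2" using q(3,4,5) g12 by (cases q; cases "tl q") auto
    then have "is_cycle EH (h # q)" using q e1 e2 gT sq
      unfolding is_cycle_def by (auto simp: walk_Cons2)
    then have "cycle_through EH (T \<union> {h}) h" unfolding cycle_through_def using sq by force
    then have "h \<in> cycle_interval VH EH T" using gh gT unfolding cycle_interval_def by auto
    then show False using assms(2) gT unfolding cycle_convex_def by auto
  qed
  then show ?thesis unfolding cycle_convex_def cycle_interval_def by auto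
qed

lemma convex_full: "cycle_convex V E V"
  unfolding cycle_convex_def cycle_interval_def by auto

theorem mainTheorem5:
  fixes VG :: "'a set" and EG :: "'a \<Rightarrow> 'a \<Rightarrow> bool"
    and VH :: "'b set" and EH :: "'b \<Rightarrow> 'b \<Rightarrow> bool"
    and S :: "('a \<times> 'b) set"
  assumes "graph VG EG" and "graph VH EH"
    and "connected VG EG" and "connected VH EH"
    and "card VG \<ge> 2" and "card VH \<ge> 2"
    and "cycle_hull_set (VG \<times> VH) (cart_adj EG EH) S"
  shows "cycle_hull_set VG EG (fst ` S) \<and> cycle_hull_set VH EH (snd ` S)"
proof -
  have SV: "S \<subseteq> VG \<times> VH" and hull: "cycle_hull (VG \<times> VH) (cart_adj EG EH) S = VG \<times> VH"
    using assms(7) unfolding cycle_hull_set_def by auto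
  have neG: "VG \<noteq> {}" using assms(5) by auto
  have neH: "VH \<noteq> {}" using assms(6) by auto
  have A: "cycle_hull VG EG (fst ` S) = VG"
  proof
    have "VG \<in> {T. fst ` S \<subseteq> T \<and> T \<subseteq> VG \<and> cycle_convex VG EG T}"
      using SV convex_full[of VG EG] by auto
    then show "cycle_hull VG EG (fst ` S) \<subseteq> VG"
      unfolding cycle_hull_def by (rule Inter_lower)
  next
    show "VG \<subseteq> cycle_hull VG EG (fst ` S)"
      unfolding cycle_hull_def
    proof (rule Inter_greatest)
      fix T assume "T \<in> {T. fst ` S \<subseteq> T \<and> T \<subseteq> VG \<and> cycle_convex VG EG T}"
      then have T: "fst ` S \<subseteq> T" "T \<subseteq> VG" "cycle_convex VG EG T" by auto
      have "S \<subseteq> T \<times> VH" using T(1) SV by force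
      moreover have "T \<times> VH \<subseteq> VG \<times> VH" using T(2) by auto
      ultimately have "T \<times> VH \<in> {U. S \<subseteq> U \<and> U \<subseteq> VG \<times> VH \<and> cycle_convex (VG \<times> VH) (cart_adj EG EH) U}"
        using convex_prod_fst[OF T(2) T(3), of VH EH] by blast
      then have "cycle_hull (VG \<times> VH) (cart_adj EG EH) S \<subseteq> T \<times> VH"
        unfolding cycle_hull_def by (rule Inter_lower)
      then have "VG \<times> VH \<subseteq> T \<times> VH" using hull by simp
      then show "VG \<subseteq> T" using neH by blast
    qed
  qed
  have B: "cycle_hull VH EH (snd ` S) = VH"
  proof
    have "VH \<in> {T. snd ` S \<subseteq> T \<and> T \<subseteq> VH \<and> cycle_convex VH EH T}"
      using SV convex_full[of VH EH] by auto
    then show "cycle_hull VH EH (snd ` S) \<subseteq> VH"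
      unfolding cycle_hull_def by (rule Inter_lower)
  next
    show "VH \<subseteq> cycle_hull VH EH (snd ` S)"
      unfolding cycle_hull_def
    proof (rule Inter_greatest)
      fix T assume "T \<in> {T. snd ` S \<subseteq> T \<and> T \<subseteq> VH \<and> cycle_convex VH EH T}"
      then have T: "snd ` S \<subseteq> T" "T \<subseteq> VH" "cycle_convex VH EH T" by auto
      have "S \<subseteq> VG \<times> T" using T(1) SV by force
      moreover have "VG \<times> T \<subseteq> VG \<times> VH" using T(2) by auto
      ultimately have "VG \<times> T \<in> {U. S \<subseteq> U \<and> U \<subseteq> VG \<times> VH \<and> cycle_convex (VG \<times> VH) (cart_adj EG EH) U}"
        using convex_prod_snd[OF T(2) T(3), of VG EG] by blast
      then have "cycle_hull (VG \<times> VH) (cart_adj EG EH) S \<subseteq> VG \<times> T"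
        unfolding cycle_hull_def by (rule Inter_lower)
      then have "VG \<times> VH \<subseteq> VG \<times> T" using hull by simp
      then show "VH \<subseteq> T" using neG by blast
    qed
  qed
  show ?thesis using A B SV unfolding cycle_hull_set_def by auto
qed

end
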